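(* Let $x\in S_N$. Then $x$ contains a $[231]$-pattern if and only if $x$ has an unmatched ascent. Likewise, $x$ contains a $[312]$-pattern if and only if $x$ has an unmatched descent.
   Context: $S_N$ is generated by $s_1,\dots,s_{N-1}$; permutations are in one-line notation and composed as functions, $(uv)(j)=u(v(j))$, so $xs_i$ swaps the entries in positions $i,i+1$. $\operatorname{len}$ denotes Coxeter length (number of inversions). $y$ has a right descent at $i$ if $\operatorname{len}(ys_i)<\operatorname{len}(y)$, and $z$ has a left descent at $i$ if $\operatorname{len}(s_iz)<\operatorname{len}(z)$. $x$ has an unmatched ascent if there exist $i$ and $y,z\in S_N$ with $x=y\,s_is_{i+1}\,z$, $\operatorname{len}(x)=\operatorname{len}(y)+2+\operatorname{len}(z)$, $y$ has no right descents in $\{i,i+1\}$ and $z$ has no left descents in $\{i,i+1\}$. An unmatched descent is defined identically with $s_is_{i+1}$ replaced by $s_{i+1}s_i$. $x$ contains a pattern $\sigma\in S_3$ if some subsequence $x(a),x(b),x(c)$, $a<b<c$, is in the same relative order as $\sigma$. *)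

theory Defs
  imports "HOL-Combinatorics.Combinatorics"
begin

text \<open>Permutations of S_N are functions on nat permuting {1..N} (positions and values 1..N);
  composition is function composition, (u v)(j) = u (v j).\<close>

definition sgen :: "nat \<Rightarrow> nat \<Rightarrow> nat" where
  "sgen i = transpose i (Suc i)"

definition len :: "nat \<Rightarrow> (nat \<Rightarrow> nat) \<Rightarrow> nat" where
  "len N x = card {(a, b). 1 \<le> a \<and> a < b \<and> b \<le> N \<and> x a > x b}"

definition right_descent :: "nat \<Rightarrow> (nat \<Rightarrow> nat) \<Rightarrow> nat \<Rightarrow> bool" where
  "right_descent N y i \<longleftrightarrow> len N (y \<circ> sgen i) < len N y"

definition left_descent :: "nat \<Rightarrow> (nat \<Rightarrow> nat) \<Rightarrow> nat \<Rightarrow> bool" where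
  "left_descent N z i \<longleftrightarrow> len N (sgen i \<circ> z) < len N z"

definition unmatched_ascent :: "nat \<Rightarrow> (nat \<Rightarrow> nat) \<Rightarrow> bool" where
  "unmatched_ascent N x \<longleftrightarrow>
     (\<exists>i y z. 1 \<le> i \<and> i + 1 \<le> N - 1 \<and> y permutes {1..N} \<and> z permutes {1..N} \<and>
        x = y \<circ> sgen i \<circ> sgen (i + 1) \<circ> z \<and>
        len N x = len N y + 2 + len N z \<and>
        \<not> right_descent N y i \<and> \<not> right_descent N y (i + 1) \<and>
        \<not> left_descent N z i \<and> \<not> left_descent N z (i + 1))"

definition unmatched_descent :: "nat \<Rightarrow> (nat \<Rightarrow> nat) \<Rightarrow> bool" where
  "unmatched_descent N x \<longleftrightarrow>
     (\<exists>i y z. 1 \<le> i \<and> i + 1 \<le> N - 1 \<and> y permutes {1..N} \<and> z permutes {1..N} \<and>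
        x = y \<circ> sgen (i + 1) \<circ> sgen i \<circ> z \<and>
        len N x = len N y + 2 + len N z \<and>
        \<not> right_descent N y i \<and> \<not> right_descent N y (i + 1) \<and>
        \<not> left_descent N z i \<and> \<not> left_descent N z (i + 1))"

text \<open>Pattern sigma in S_3 given in one-line notation as a list of length 3.\<close>
definition contains_pattern :: "nat \<Rightarrow> (nat \<Rightarrow> nat) \<Rightarrow> nat list \<Rightarrow> bool" where
  "contains_pattern N x \<sigma> \<longleftrightarrow>
     (\<exists>a b c. 1 \<le> a \<and> a < b \<and> b < c \<and> c \<le> N \<and>
        (let p = [a, b, c] in
          \<forall>j < 3. \<forall>k < 3. (x (p ! j) < x (p ! k) \<longleftrightarrow> \<sigma> ! j < \<sigma> ! k)))"

end

theory Submission imports Defs begin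

definition Inv :: "nat \<Rightarrow> (nat \<Rightarrow> nat) \<Rightarrow> (nat \<times> nat) set" where
  "Inv N x = {(a, b). 1 \<le> a \<and> a < b \<and> b \<le> N \<and> x a > x b}"

lemma len_Inv: "len N x = card (Inv N x)" by (simp add: len_def Inv_def)

lemma finite_Inv: "finite (Inv N x)"
  by (rule finite_subset[of _ "{1..N} \<times> {1..N}"]) (auto simp: Inv_def)

lemma tr_mono: "\<not> ({m,n} = {k, Suc k}) \<Longrightarrow> (transpose k (Suc k) m > transpose k (Suc k) n) = (m > n)"
  unfolding transpose_def by (auto simp: doubleton_eq_iff)

lemma len_left:
  assumes z: "z permutes {1..N}" and k: "1 \<le> k" "k + 1 \<le> N" and lt: "inv z k < inv z (k+1)"
  shows "len N (sgen k \<circ> z) = len N z + 1"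
proof -
  let ?u = "inv z k" and ?v = "inv z (k+1)"
  have zu: "z ?u = k" "z ?v = k+1" using permutes_inverses[OF z] by auto
  have uv: "?u \<in> {1..N}" "?v \<in> {1..N}" using permutes_in_image[OF permutes_inv[OF z]] k by auto
  have "Inv N (sgen k \<circ> z) = insert (?u, ?v) (Inv N z)"
  proof (rule set_eqI, clarify)
    fix a b
    show "((a, b) \<in> Inv N (sgen k \<circ> z)) = ((a, b) \<in> insert (?u, ?v) (Inv N z))"
    proof (cases "a < b \<and> {z a, z b} = {k, k+1}")
      case True
      then have "z a = k \<and> z b = k+1 \<or> z a = k+1 \<and> z b = k" by (auto simp: doubleton_eq_iff)
      then have "a = ?u \<and> b = ?v \<or> a = ?v \<and> b = ?u" using permutes_inv_eq[OF z] by metis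
      then have "a = ?u \<and> b = ?v" using True lt by auto
      then show ?thesis using zu uv lt by (auto simp: Inv_def sgen_def)
    next
      case False
      have "(a, b) \<noteq> (?u, ?v)" using False zu lt by auto
      moreover have "a < b \<Longrightarrow> (sgen k (z a) > sgen k (z b)) = (z a > z b)"
        using False tr_mono[of "z a" "z b" k] by (simp add: sgen_def)
      ultimately show ?thesis by (auto simp: Inv_def)
    qed
  qed
  moreover have "(?u, ?v) \<notin> Inv N z" using zu by (auto simp: Inv_def)
  ultimately show ?thesis by (simp add: len_Inv finite_Inv)
qed

lemma len_inv:
  assumes x: "x permutes {1..N}"
  shows "len N (inv x) = len N x"
proof -
  have "bij_betw (\<lambda>(a,b). (x b, x a)) (Inv N x) (Inv N (inv x))"
  proof (rule bij_betw_byWitness[where f' = "\<lambda>(c,d). (inv x d, inv x c)"])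
    show "\<forall>a\<in>Inv N x. (\<lambda>(c, d). (inv x d, inv x c)) ((\<lambda>(a, b). (x b, x a)) a) = a"
      by (simp add: permutes_inverses[OF x] split_beta)
    show "\<forall>a'\<in>Inv N (inv x). (\<lambda>(a, b). (x b, x a)) ((\<lambda>(c, d). (inv x d, inv x c)) a') = a'"
      by (simp add: permutes_inverses[OF x] split_beta)
    show "(\<lambda>(a, b). (x b, x a)) ` Inv N x \<subseteq> Inv N (inv x)"
    proof clarify
      fix a b assume "(a,b) \<in> Inv N x"
      then have h: "1 \<le> a" "a < b" "b \<le> N" "x a > x b" by (auto simp: Inv_def)
      have ab: "a \<in> {1..N}" "b \<in> {1..N}" using h by auto
      have "x a \<in> {1..N}" "x b \<in> {1..N}" using ab by (simp_all only: permutes_in_image[OF x])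
      then show "(x b, x a) \<in> Inv N (inv x)" using h permutes_inverses[OF x] by (auto simp: Inv_def)
    qed
    show "(\<lambda>(c, d). (inv x d, inv x c)) ` Inv N (inv x) \<subseteq> Inv N x"
    proof clarify
      fix a b assume "(a,b) \<in> Inv N (inv x)"
      then have h: "1 \<le> a" "a < b" "b \<le> N" "inv x a > inv x b" by (auto simp: Inv_def)
      have ab: "a \<in> {1..N}" "b \<in> {1..N}" using h by auto
      have "inv x a \<in> {1..N}" "inv x b \<in> {1..N}" using ab by (simp_all only: permutes_in_image[OF permutes_inv[OF x]])
      then show "(inv x b, inv x a) \<in> Inv N x" using h permutes_inverses[OF x] by (auto simp: Inv_def)
    qed
  qed
  then have "card (Inv N x) = card (Inv N (inv x))" by (rule bij_betw_same_card)
  then show ?thesis by (simp add: len_Inv)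
qed

lemma sgen_permutes: "1 \<le> k \<Longrightarrow> k + 1 \<le> N \<Longrightarrow> sgen k permutes {1..N}"
  unfolding sgen_def by (rule permutes_swap_id) auto

lemma len_right:
  assumes y: "y permutes {1..N}" and k: "1 \<le> k" "k + 1 \<le> N" and lt: "y k < y (k+1)"
  shows "len N (y \<circ> sgen k) = len N y + 1"
proof -
  have s: "sgen k permutes {1..N}" using sgen_permutes k .
  have "inv (y \<circ> sgen k) = sgen k \<circ> inv y"
    by (simp add: o_inv_distrib permutes_bij[OF y] sgen_def)
  then have "len N (y \<circ> sgen k) = len N (sgen k \<circ> inv y)"
    using len_inv[OF permutes_compose[OF s y]] by simp
  also have "\<dots> = len N (inv y) + 1"
    by (rule len_left[OF permutes_inv[OF y] k]) (use lt in \<open>simp add: permutes_inv_inv[OF y]\<close>)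
  finally show ?thesis using len_inv[OF y] by simp
qed

lemma sgen_sgen: "sgen k \<circ> sgen k = id" by (simp add: sgen_def)

lemma right_descent_iff:
  assumes y: "y permutes {1..N}" and k: "1 \<le> k" "k + 1 \<le> N"
  shows "right_descent N y k \<longleftrightarrow> y k > y (k+1)"
proof (cases "y k < y (k+1)")
  case True then show ?thesis using len_right[OF y k] by (simp add: right_descent_def)
next
  case False
  have ne: "y k \<noteq> y (k+1)" using permutes_inj[OF y] by (simp add: inj_eq)
  have s: "sgen k permutes {1..N}" using sgen_permutes k .
  have "len N (y \<circ> sgen k \<circ> sgen k) = len N (y \<circ> sgen k) + 1"
    by (rule len_right[OF permutes_compose[OF s y] k]) (use False ne in \<open>auto simp: sgen_def\<close>)
  moreover have "y \<circ> sgen k \<circ> sgen k = y" by (simp add: fun_eq_iff sgen_def)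
  ultimately have "len N y = len N (y \<circ> sgen k) + 1" by simp
  then show ?thesis using False ne unfolding right_descent_def by linarith
qed

lemma left_descent_iff:
  assumes z: "z permutes {1..N}" and k: "1 \<le> k" "k + 1 \<le> N"
  shows "left_descent N z k \<longleftrightarrow> inv z k > inv z (k+1)"
proof (cases "inv z k < inv z (k+1)")
  case True then show ?thesis using len_left[OF z k] by (simp add: left_descent_def)
next
  case False
  have ne: "inv z k \<noteq> inv z (k+1)" using permutes_inj[OF permutes_inv[OF z]] by (simp add: inj_eq)
  have s: "sgen k permutes {1..N}" using sgen_permutes k .
  have iv: "inv (sgen k \<circ> z) = inv z \<circ> sgen k"
    by (simp add: o_inv_distrib permutes_bij[OF z] sgen_def)
  have "len N (sgen k \<circ> (sgen k \<circ> z)) = len N (sgen k \<circ> z) + 1"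
    by (rule len_left[OF permutes_compose[OF z s] k]) (unfold iv, use False ne in \<open>auto simp: sgen_def\<close>)
  moreover have "sgen k \<circ> (sgen k \<circ> z) = z" by (simp add: fun_eq_iff sgen_def)
  ultimately have "len N z = len N (sgen k \<circ> z) + 1" by simp
  then show ?thesis using False ne unfolding left_descent_def by linarith
qed


lemma all3: "(\<forall>j<(3::nat). P j) = (P 0 \<and> P 1 \<and> P 2)"
  by (auto simp: numeral_3_eq_3 numeral_2_eq_2 less_Suc_eq)

lemma pattern_iff:
  "contains_pattern N x [s1, s2, s3] \<longleftrightarrow>
   (\<exists>a b c. 1 \<le> a \<and> a < b \<and> b < c \<and> c \<le> N \<and>
     ((x a < x b) = (s1 < s2)) \<and> ((x a < x c) = (s1 < s3)) \<and> ((x b < x a) = (s2 < s1)) \<and>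
     ((x b < x c) = (s2 < s3)) \<and> ((x c < x a) = (s3 < s1)) \<and> ((x c < x b) = (s3 < s2)))"
  unfolding contains_pattern_def Let_def all3 by auto

lemma first_after:
  assumes "m < (k::nat)" "P k"
  shows "\<exists>t. m < t \<and> t \<le> k \<and> P t \<and> (\<forall>s. m < s \<and> s < t \<longrightarrow> \<not> P s)"
proof -
  let ?t = "LEAST t. m < t \<and> P t"
  have 1: "m < ?t \<and> P ?t" by (rule LeastI[of _ k]) (use assms in auto)
  have 2: "?t \<le> k" by (rule Least_le) (use assms in auto)
  have 3: "\<forall>s. m < s \<and> s < ?t \<longrightarrow> \<not> P s" using not_less_Least by blast
  show ?thesis using 1 2 3 by blast
qed

lemma last_before:
  assumes "(k::nat) < m" "P k"
  shows "\<exists>t. k \<le> t \<and> t < m \<and> P t \<and> (\<forall>s. t < s \<and> s < m \<longrightarrow> \<not> P s)"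
proof -
  let ?S = "{t. k \<le> t \<and> t < m \<and> P t}"
  have fin: "finite ?S" by (rule finite_subset[of _ "{..<m}"]) auto
  have ne: "k \<in> ?S" using assms by auto
  have 1: "Max ?S \<in> ?S" using fin ne by (intro Max_in) auto
  have 2: "\<forall>s. Max ?S < s \<and> s < m \<longrightarrow> \<not> P s"
  proof (intro allI impI)
    fix s assume "Max ?S < s \<and> s < m"
    moreover have "k \<le> Max ?S" using Max_ge[OF fin ne] .
    ultimately have ks: "k \<le> s" by simp
    show "\<not> P s"
    proof
      assume "P s"
      then have "s \<in> ?S" using ks \<open>Max ?S < s \<and> s < m\<close> by simp
      then have "s \<le> Max ?S" using Max_ge[OF fin] by blast
      then show False using \<open>Max ?S < s \<and> s < m\<close> by simp
    qed
  qed
  show ?thesis using 1 2 by blast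
qed

lemma len_crit:
  assumes w: "w permutes {1..N}" and z: "z permutes {1..N}"
    and H: "\<forall>s t. 1 \<le> s \<longrightarrow> s < t \<longrightarrow> t \<le> N \<longrightarrow> z t < z s \<longrightarrow> w (z t) < w (z s)"
  shows "len N (w \<circ> z) = len N w + len N z"
proof -
  define E where "E = {(a, b). 1 \<le> a \<and> a < b \<and> b \<le> N \<and> z a < z b \<and> w (z a) > w (z b)}"
  have finE: "finite E" by (rule finite_subset[of _ "{1..N} \<times> {1..N}"]) (auto simp: E_def)
  have zin: "a \<in> {1..N} \<Longrightarrow> z a \<in> {1..N}" for a by (simp only: permutes_in_image[OF z])
  have izin: "a \<in> {1..N} \<Longrightarrow> inv z a \<in> {1..N}" for a by (simp only: permutes_in_image[OF permutes_inv[OF z]])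
  have zinj: "z a = z b \<Longrightarrow> a = b" for a b using permutes_inj[OF z] by (simp add: inj_eq)
  have un: "Inv N (w \<circ> z) = Inv N z \<union> E"
  proof (rule set_eqI, clarify)
    fix a b
    show "((a, b) \<in> Inv N (w \<circ> z)) = ((a, b) \<in> Inv N z \<union> E)"
    proof
      assume h: "(a, b) \<in> Inv N (w \<circ> z)"
      then have "a \<noteq> b" by (auto simp: Inv_def)
      then have "z a \<noteq> z b" using zinj by blast
      then show "(a, b) \<in> Inv N z \<union> E" using h by (auto simp: Inv_def E_def)
    next
      assume "(a, b) \<in> Inv N z \<union> E"
      then show "(a, b) \<in> Inv N (w \<circ> z)"
      proof
        assume "(a, b) \<in> Inv N z"
        then have h: "1 \<le> a" "a < b" "b \<le> N" "z b < z a" by (auto simp: Inv_def)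
        then have "w (z b) < w (z a)" using H by blast
        then show ?thesis using h by (simp add: Inv_def)
      qed (auto simp: Inv_def E_def)
    qed
  qed
  have dis: "Inv N z \<inter> E = {}" by (auto simp: Inv_def E_def)
  have "bij_betw (\<lambda>(a,b). (z a, z b)) E (Inv N w)"
  proof (rule bij_betw_byWitness[where f' = "\<lambda>(c,d). (inv z c, inv z d)"])
    show "\<forall>a\<in>E. (\<lambda>(c, d). (inv z c, inv z d)) ((\<lambda>(a, b). (z a, z b)) a) = a"
      by (simp add: permutes_inverses[OF z] split_beta)
    show "\<forall>a'\<in>Inv N w. (\<lambda>(a, b). (z a, z b)) ((\<lambda>(c, d). (inv z c, inv z d)) a') = a'"
      by (simp add: permutes_inverses[OF z] split_beta)
    show "(\<lambda>(a, b). (z a, z b)) ` E \<subseteq> Inv N w"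
    proof clarify
      fix a b assume "(a,b) \<in> E"
      then have h: "1 \<le> a" "a < b" "b \<le> N" "z a < z b" "w (z a) > w (z b)" by (simp_all add: E_def)
      have ab: "a \<in> {1..N}" "b \<in> {1..N}" using h by auto
      have "z a \<in> {1..N}" "z b \<in> {1..N}" using zin ab by blast+
      then show "(z a, z b) \<in> Inv N w" using h by (simp add: Inv_def)
    qed
    show "(\<lambda>(c, d). (inv z c, inv z d)) ` Inv N w \<subseteq> E"
    proof clarify
      fix c d assume "(c,d) \<in> Inv N w"
      then have h: "1 \<le> c" "c < d" "d \<le> N" "w c > w d" by (simp_all add: Inv_def)
      have cd: "c \<in> {1..N}" "d \<in> {1..N}" using h by auto
      have r: "inv z c \<in> {1..N}" "inv z d \<in> {1..N}" using izin cd by blast+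
      have zz: "z (inv z c) = c" "z (inv z d) = d" by (simp_all add: permutes_inverses[OF z])
      have ne: "inv z c \<noteq> inv z d"
      proof
        assume "inv z c = inv z d"
        then have "z (inv z c) = z (inv z d)" by simp
        then show False using zz h by simp
      qed
      have "inv z c < inv z d"
      proof (rule ccontr)
        assume "\<not> inv z c < inv z d"
        then have "inv z d < inv z c" using ne by simp
        then have "w (z (inv z c)) < w (z (inv z d))"
          using H[rule_format, of "inv z d" "inv z c"] r zz h by simp
        then show False using zz h by simp
      qed
      then show "(inv z c, inv z d) \<in> E" using r h zz by (simp add: E_def)
    qed
  qed
  then have "card E = card (Inv N w)" by (rule bij_betw_same_card)
  moreover have "card (Inv N (w \<circ> z)) = card (Inv N z) + card E"
    unfolding un by (rule card_Un_disjoint[OF finite_Inv finE dis])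
  ultimately show ?thesis by (simp add: len_Inv)
qed


lemma core:
  assumes x: "x permutes {1..N}" and pqr: "1 \<le> p" "p < q" "q < r" "r \<le> N"
    and B: "\<forall>s. p < s \<and> s < q \<longrightarrow> x s < x p"
    and C: "\<forall>s. q < s \<and> s < r \<longrightarrow> x s > x r"
  obtains z where "z permutes {1..N}" "inv z (q - 1) = p" "inv z q = q" "inv z (q + 1) = r"
    "len N x = len N (x \<circ> inv z) + len N z"
proof -
  define z where "z j = (if j = p then q - 1 else if p < j \<and> j < q then j - 1
      else if q < j \<and> j < r then j + 1 else if j = r then q + 1 else j)" for j
  define zi where "zi j = (if j = q - 1 then p else if p \<le> j \<and> j < q - 1 then j + 1
      else if q + 1 < j \<and> j \<le> r then j - 1 else if j = q + 1 then r else j)" for j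
  have zzi: "z (zi j) = j" for j using pqr unfolding z_def zi_def by auto
  have ziz: "zi (z j) = j" for j using pqr unfolding z_def zi_def by auto
  have out: "j \<notin> {1..N} \<Longrightarrow> z j = j" for j using pqr unfolding z_def by auto
  have zp: "z permutes {1..N}"
    unfolding permutes_def
  proof (intro conjI allI impI)
    fix j show "j \<notin> {1..N} \<Longrightarrow> z j = j" by (rule out)
  next
    fix y show "\<exists>!j. z j = y"
    proof
      show "z (zi y) = y" by (rule zzi)
    next
      fix j assume "z j = y" then show "j = zi y" using ziz by metis
    qed
  qed
  have invz: "inv z = zi"
  proof
    fix j show "inv z j = zi j" using permutes_inv_eq[OF zp] zzi by metis
  qed
  have zinv: "s < t \<Longrightarrow> z t < z s \<Longrightarrow> (s = p \<and> p < t \<and> t < q) \<or> (q < s \<and> s < r \<and> t = r)" for s t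
    using pqr unfolding z_def by (auto split: if_splits)
  have w: "x \<circ> inv z permutes {1..N}" by (rule permutes_compose[OF permutes_inv[OF zp] x])
  have wz: "x \<circ> inv z \<circ> z = x" by (simp add: fun_eq_iff invz ziz)
  have "len N (x \<circ> inv z \<circ> z) = len N (x \<circ> inv z) + len N z"
  proof (rule len_crit[OF w zp], intro allI impI)
    fix s t assume h: "1 \<le> s" "s < t" "t \<le> N" "z t < z s"
    have "x t < x s"
    proof (cases "s = p \<and> p < t \<and> t < q")
      case True then show ?thesis using B by auto
    next
      case False
      then have "q < s \<and> s < r \<and> t = r" using zinv h by blast
      then show ?thesis using C by auto
    qed
    then show "(x \<circ> inv z) (z t) < (x \<circ> inv z) (z s)" by (simp add: invz ziz)
  qed
  then have "len N x = len N (x \<circ> inv z) + len N z" using wz by simp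
  moreover have "inv z (q - 1) = p" "inv z q = q" "inv z (q + 1) = r"
    using pqr by (auto simp: invz zi_def)
  ultimately show ?thesis using that zp by blast
qed


lemma inj_perm: "x permutes S \<Longrightarrow> a \<noteq> b \<Longrightarrow> x a \<noteq> x b"
  using permutes_inj by (metis inj_eq)

lemma asc_to_pat:
  assumes x: "x permutes {1..N}" and u: "unmatched_ascent N x"
  shows "contains_pattern N x [2, 3, 1]"
proof -
  obtain i y z where i: "1 \<le> i" "i + 1 \<le> N - 1" and y: "y permutes {1..N}" and z: "z permutes {1..N}"
    and xe: "x = y \<circ> sgen i \<circ> sgen (i + 1) \<circ> z"
    and d: "\<not> right_descent N y i" "\<not> right_descent N y (i + 1)"
       "\<not> left_descent N z i" "\<not> left_descent N z (i + 1)"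
    using u unfolding unmatched_ascent_def by blast
  have k1: "i + 1 \<le> N" "1 \<le> i + 1" "i + 1 + 1 \<le> N" using i by auto
  have y1: "y i < y (i+1)" using d(1) right_descent_iff[OF y i(1) k1(1)] inj_perm[OF y, of i "i+1"] by auto
  have y2: "y (i+1) < y (i+1+1)" using d(2) right_descent_iff[OF y k1(2) k1(3)] inj_perm[OF y, of "i+1" "i+1+1"] by auto
  have z1: "inv z i < inv z (i+1)" using d(3) left_descent_iff[OF z i(1) k1(1)] inj_perm[OF permutes_inv[OF z], of i "i+1"] by auto
  have z2: "inv z (i+1) < inv z (i+1+1)" using d(4) left_descent_iff[OF z k1(2) k1(3)] inj_perm[OF permutes_inv[OF z], of "i+1" "i+1+1"] by auto
  have r1: "inv z i \<in> {1..N}" "inv z (i+1+1) \<in> {1..N}" using i k1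
    by (simp_all only: permutes_in_image[OF permutes_inv[OF z]]) auto
  have zz: "z (inv z j) = j" for j by (simp add: permutes_inverses[OF z])
  have xp: "x (inv z i) = y (i+1)" unfolding xe using zz[of i] by (simp add: sgen_def)
  have xq: "x (inv z (i+1)) = y (i+1+1)" unfolding xe using zz[of "i+1"] by (simp add: sgen_def)
  have xr: "x (inv z (i+1+1)) = y i" unfolding xe using zz[of "i+1+1"] by (simp add: sgen_def)
  show ?thesis unfolding pattern_iff
    apply (rule exI[of _ "inv z i"], rule exI[of _ "inv z (i+1)"], rule exI[of _ "inv z (i+1+1)"])
    using r1 z1 z2 y1 y2 xp xq xr by auto
qed

lemma desc_to_pat:
  assumes x: "x permutes {1..N}" and u: "unmatched_descent N x"
  shows "contains_pattern N x [3, 1, 2]"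
proof -
  obtain i y z where i: "1 \<le> i" "i + 1 \<le> N - 1" and y: "y permutes {1..N}" and z: "z permutes {1..N}"
    and xe: "x = y \<circ> sgen (i + 1) \<circ> sgen i \<circ> z"
    and d: "\<not> right_descent N y i" "\<not> right_descent N y (i + 1)"
       "\<not> left_descent N z i" "\<not> left_descent N z (i + 1)"
    using u unfolding unmatched_descent_def by blast
  have k1: "i + 1 \<le> N" "1 \<le> i + 1" "i + 1 + 1 \<le> N" using i by auto
  have y1: "y i < y (i+1)" using d(1) right_descent_iff[OF y i(1) k1(1)] inj_perm[OF y, of i "i+1"] by auto
  have y2: "y (i+1) < y (i+1+1)" using d(2) right_descent_iff[OF y k1(2) k1(3)] inj_perm[OF y, of "i+1" "i+1+1"] by auto
  have z1: "inv z i < inv z (i+1)" using d(3) left_descent_iff[OF z i(1) k1(1)] inj_perm[OF permutes_inv[OF z], of i "i+1"] by auto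
  have z2: "inv z (i+1) < inv z (i+1+1)" using d(4) left_descent_iff[OF z k1(2) k1(3)] inj_perm[OF permutes_inv[OF z], of "i+1" "i+1+1"] by auto
  have r1: "inv z i \<in> {1..N}" "inv z (i+1+1) \<in> {1..N}" using i k1
    by (simp_all only: permutes_in_image[OF permutes_inv[OF z]]) auto
  have zz: "z (inv z j) = j" for j by (simp add: permutes_inverses[OF z])
  have xp: "x (inv z i) = y (i+1+1)" unfolding xe using zz[of i] by (simp add: sgen_def)
  have xq: "x (inv z (i+1)) = y i" unfolding xe using zz[of "i+1"] by (simp add: sgen_def)
  have xr: "x (inv z (i+1+1)) = y (i+1)" unfolding xe using zz[of "i+1+1"] by (simp add: sgen_def)
  show ?thesis unfolding pattern_iff
    apply (rule exI[of _ "inv z i"], rule exI[of _ "inv z (i+1)"], rule exI[of _ "inv z (i+1+1)"])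
    using r1 z1 z2 y1 y2 xp xq xr by auto
qed


lemma pat_to_asc:
  assumes x: "x permutes {1..N}" and c: "contains_pattern N x [2, 3, 1]"
  shows "unmatched_ascent N x"
proof -
  obtain p q0 r0 where h: "1 \<le> p" "p < q0" "q0 < r0" "r0 \<le> N" "x p < x q0" "x r0 < x p"
    using c unfolding pattern_iff by auto
  obtain q where q: "p < q" "q \<le> q0" "x p < x q" "\<forall>s. p < s \<and> s < q \<longrightarrow> \<not> x p < x s"
    using first_after[of p q0 "\<lambda>t. x p < x t"] h by blast
  obtain r where r: "q < r" "r \<le> r0" "x r < x p" "\<forall>s. q < s \<and> s < r \<longrightarrow> \<not> x s < x p"
    using first_after[of q r0 "\<lambda>t. x t < x p"] h q by auto
  have B: "\<forall>s. p < s \<and> s < q \<longrightarrow> x s < x p"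
  proof (intro allI impI)
    fix s assume "p < s \<and> s < q"
    then show "x s < x p" using q(4) inj_perm[OF x, of s p] by force
  qed
  have C: "\<forall>s. q < s \<and> s < r \<longrightarrow> x s > x r"
  proof (intro allI impI)
    fix s assume a: "q < s \<and> s < r"
    then have "x s \<noteq> x p" using inj_perm[OF x, of s p] q by auto
    then show "x s > x r" using r(4) a r(3) by force
  qed
  obtain z where z: "z permutes {1..N}" "inv z (q - 1) = p" "inv z q = q" "inv z (q + 1) = r"
    "len N x = len N (x \<circ> inv z) + len N z"
    using core[OF x h(1) q(1) r(1) _ B C] r h by auto
  define i where "i = q - 1"
  have ii: "i + 1 = q" "i + 1 + 1 = q + 1" using q h unfolding i_def by auto
  define w where "w = x \<circ> inv z"
  define y where "y = w \<circ> sgen (i + 1) \<circ> sgen i"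
  have wp: "w permutes {1..N}" unfolding w_def by (rule permutes_compose[OF permutes_inv[OF z(1)] x])
  have k: "1 \<le> i" "i + 1 \<le> N" "1 \<le> i + 1" "i + 1 + 1 \<le> N" using q r h unfolding i_def by auto
  have yp: "y permutes {1..N}" unfolding y_def
    by (intro permutes_compose[OF sgen_permutes[OF k(1,2)]] permutes_compose[OF sgen_permutes[OF k(3,4)]] wp)
  have yw: "y \<circ> sgen i \<circ> sgen (i + 1) = w" by (simp add: y_def fun_eq_iff sgen_def)
  have xe: "x = y \<circ> sgen i \<circ> sgen (i + 1) \<circ> z"
    unfolding yw w_def by (simp add: fun_eq_iff permutes_inverses[OF z(1)])
  have wi: "w i = x p" "w (i+1) = x q" "w (i+1+1) = x r" unfolding w_def using z ii i_def by auto
  have y0: "y i = x r" "y (i+1) = x p" "y (i+1+1) = x q"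
    using wi by (simp_all add: y_def sgen_def)
  have yl1: "y i < y (i+1)" "y (i+1) < y (i+1+1)" using y0 r q by auto
  have L1: "len N (y \<circ> sgen i) = len N y + 1" by (rule len_right[OF yp k(1,2) yl1(1)])
  have L2: "len N (y \<circ> sgen i \<circ> sgen (i+1)) = len N (y \<circ> sgen i) + 1"
    by (rule len_right[OF permutes_compose[OF sgen_permutes[OF k(1,2)] yp] k(3,4)])
       (use yl1 in \<open>simp add: sgen_def\<close>)
  have lens: "len N x = len N y + 2 + len N z" using z(5) L1 L2 yw unfolding w_def by simp
  have nd: "\<not> right_descent N y i" "\<not> right_descent N y (i + 1)"
    using right_descent_iff[OF yp k(1,2)] right_descent_iff[OF yp k(3,4)] yl1 by auto
  have nl: "\<not> left_descent N z i" "\<not> left_descent N z (i + 1)"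
    using left_descent_iff[OF z(1) k(1,2)] left_descent_iff[OF z(1) k(3,4)] z(2,3,4) ii q r
    unfolding i_def by auto
  show ?thesis unfolding unmatched_ascent_def
    using k yp z(1) xe lens nd nl by (intro exI[of _ i] exI[of _ y] exI[of _ z]) auto
qed

lemma pat_to_desc:
  assumes x: "x permutes {1..N}" and c: "contains_pattern N x [3, 1, 2]"
  shows "unmatched_descent N x"
proof -
  obtain p0 q0 r where h: "1 \<le> p0" "p0 < q0" "q0 < r" "r \<le> N" "x q0 < x r" "x r < x p0"
    using c unfolding pattern_iff by auto
  obtain q where q: "q0 \<le> q" "q < r" "x q < x r" "\<forall>s. q < s \<and> s < r \<longrightarrow> \<not> x s < x r"
    using last_before[of q0 r "\<lambda>t. x t < x r"] h by blast
  obtain p where p: "p0 \<le> p" "p < q" "x r < x p" "\<forall>s. p < s \<and> s < q \<longrightarrow> \<not> x r < x s"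
    using last_before[of p0 q "\<lambda>t. x r < x t"] h q by auto
  have B: "\<forall>s. p < s \<and> s < q \<longrightarrow> x s < x p"
  proof (intro allI impI)
    fix s assume a: "p < s \<and> s < q"
    then have "x s \<noteq> x r" using inj_perm[OF x, of s r] q by auto
    then show "x s < x p" using p(4) a p(3) by force
  qed
  have C: "\<forall>s. q < s \<and> s < r \<longrightarrow> x s > x r"
  proof (intro allI impI)
    fix s assume "q < s \<and> s < r"
    then show "x s > x r" using q(4) inj_perm[OF x, of s r] by force
  qed
  have p1: "1 \<le> p" using p h by auto
  obtain z where z: "z permutes {1..N}" "inv z (q - 1) = p" "inv z q = q" "inv z (q + 1) = r"
    "len N x = len N (x \<circ> inv z) + len N z"
    using core[OF x p1 p(2) q(2) h(4) B C] by auto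
  define i where "i = q - 1"
  have ii: "i + 1 = q" "i + 1 + 1 = q + 1" using p h unfolding i_def by auto
  define w where "w = x \<circ> inv z"
  define y where "y = w \<circ> sgen i \<circ> sgen (i + 1)"
  have wp: "w permutes {1..N}" unfolding w_def by (rule permutes_compose[OF permutes_inv[OF z(1)] x])
  have k: "1 \<le> i" "i + 1 \<le> N" "1 \<le> i + 1" "i + 1 + 1 \<le> N" using p q h unfolding i_def by auto
  have yp: "y permutes {1..N}" unfolding y_def
    by (intro permutes_compose[OF sgen_permutes[OF k(3,4)]] permutes_compose[OF sgen_permutes[OF k(1,2)]] wp)
  have yw: "y \<circ> sgen (i + 1) \<circ> sgen i = w" by (simp add: y_def fun_eq_iff sgen_def)
  have xe: "x = y \<circ> sgen (i + 1) \<circ> sgen i \<circ> z"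
    unfolding yw w_def by (simp add: fun_eq_iff permutes_inverses[OF z(1)])
  have wi: "w i = x p" "w (i+1) = x q" "w (i+1+1) = x r" unfolding w_def using z ii i_def by auto
  have y0: "y i = x q" "y (i+1) = x r" "y (i+1+1) = x p"
    using wi by (simp_all add: y_def sgen_def)
  have yl1: "y i < y (i+1)" "y (i+1) < y (i+1+1)" using y0 p q by auto
  have L1: "len N (y \<circ> sgen (i+1)) = len N y + 1" by (rule len_right[OF yp k(3,4) yl1(2)])
  have L2: "len N (y \<circ> sgen (i+1) \<circ> sgen i) = len N (y \<circ> sgen (i+1)) + 1"
    by (rule len_right[OF permutes_compose[OF sgen_permutes[OF k(3,4)] yp] k(1,2)])
       (use yl1 in \<open>simp add: sgen_def\<close>)
  have lens: "len N x = len N y + 2 + len N z" using z(5) L1 L2 yw unfolding w_def by simp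
  have nd: "\<not> right_descent N y i" "\<not> right_descent N y (i + 1)"
    using right_descent_iff[OF yp k(1,2)] right_descent_iff[OF yp k(3,4)] yl1 by auto
  have nl: "\<not> left_descent N z i" "\<not> left_descent N z (i + 1)"
    using left_descent_iff[OF z(1) k(1,2)] left_descent_iff[OF z(1) k(3,4)] z(2,3,4) ii p q
    unfolding i_def by auto
  show ?thesis unfolding unmatched_descent_def
    using k yp z(1) xe lens nd nl by (intro exI[of _ i] exI[of _ y] exI[of _ z]) auto
qed

theorem mainTheorem11:
  fixes N :: nat and x :: "nat \<Rightarrow> nat"
  assumes "x permutes {1..N}"
  shows "(contains_pattern N x [2, 3, 1] \<longleftrightarrow> unmatched_ascent N x) \<and>
         (contains_pattern N x [3, 1, 2] \<longleftrightarrow> unmatched_descent N x)"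
  using assms asc_to_pat desc_to_pat pat_to_asc pat_to_desc by blast

end
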